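(* Let $X_1,\ldots,X_m$ ($m\ge 2$) be real-valued square integrable random variables on a common probability space, $\mathbf{X}=(X_1,\ldots,X_m)$. Then the partial linear mean impact $\iota^{lin}_{X_1\mid X_2,\ldots,X_m}$ is free of confounding (with respect to $X_2,\ldots,X_m$) if and only if $E(X_1\mid X_2,\ldots,X_m)$ is (almost surely) a linear function $\beta_0+\sum_{j=2}^m\beta_jX_j$ of $X_2,\ldots,X_m$.
   Context: With $\mathcal{H}^{lin}_1=\{\delta(\mathbf{X})=\eta_0+\sum_{j=1}^m\eta_jX_j:\ E[\delta(\mathbf{X})]=0,\ E[\delta^2(\mathbf{X})]=1,\ E[X_j\delta(\mathbf{X})]=0\ \text{for all } j\ge 2\}$, the partial linear mean impact of $X_1$ on a square integrable random variable $Y$ is $\iota^{lin}_{X_1\mid X_2,\ldots,X_m}(Y)=\sup_{\delta(\mathbf{X})\in\mathcal{H}^{lin}_1}E[Y\delta(\mathbf{X})]$. This parameter is called free of confounding (with respect to $X_2,\ldots,X_m$) if $\iota^{lin}_{X_1\mid X_2,\ldots,X_m}(Y)=0$ for every square integrable random variable $Y$ such that $E(Y\mid\mathbf{X})=g(X_2,\ldots,X_m)$ for some measurable square integrable $g:\mathbb{R}^{m-1}\to\mathbb{R}$ (i.e. $E(Y\mid\mathbf{X})$ is measurable with respect to the $\sigma$-algebra generated by $X_2,\ldots,X_m$). *)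

theory Defs
  imports "HOL-Probability.Probability"
begin

definition sq_integrable :: "'a measure \<Rightarrow> ('a \<Rightarrow> real) \<Rightarrow> bool" where
  "sq_integrable M Y \<longleftrightarrow> Y \<in> borel_measurable M \<and> integrable M (\<lambda>\<omega>. (Y \<omega>)^2)"

definition lin_comb :: "(nat \<Rightarrow> 'a \<Rightarrow> real) \<Rightarrow> nat \<Rightarrow> (nat \<Rightarrow> real) \<Rightarrow> 'a \<Rightarrow> real" where
  "lin_comb X m \<eta> = (\<lambda>\<omega>. \<eta> 0 + (\<Sum>j = 1..m. \<eta> j * X j \<omega>))"

definition H_lin :: "'a measure \<Rightarrow> (nat \<Rightarrow> 'a \<Rightarrow> real) \<Rightarrow> nat \<Rightarrow> ('a \<Rightarrow> real) set" where
  "H_lin M X m = {\<delta>. \<exists>\<eta>. \<delta> = lin_comb X m \<eta>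
      \<and> (\<integral>\<omega>. \<delta> \<omega> \<partial>M) = 0
      \<and> (\<integral>\<omega>. (\<delta> \<omega>)^2 \<partial>M) = 1
      \<and> (\<forall>j\<in>{2..m}. (\<integral>\<omega>. X j \<omega> * \<delta> \<omega> \<partial>M) = 0)}"

definition partial_lin_mean_impact ::
    "'a measure \<Rightarrow> (nat \<Rightarrow> 'a \<Rightarrow> real) \<Rightarrow> nat \<Rightarrow> ('a \<Rightarrow> real) \<Rightarrow> real" where
  "partial_lin_mean_impact M X m Y =
     (if H_lin M X m = {} then 0
      else Sup ((\<lambda>\<delta>. \<integral>\<omega>. Y \<omega> * \<delta> \<omega> \<partial>M) ` H_lin M X m))"

definition sigma_gen :: "'a measure \<Rightarrow> (nat \<Rightarrow> 'a \<Rightarrow> real) \<Rightarrow> nat set \<Rightarrow> 'a measure" where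
  "sigma_gen M X I = vimage_algebra (space M) (\<lambda>\<omega>. \<lambda>j\<in>I. X j \<omega>) (\<Pi>\<^sub>M j\<in>I. borel)"

definition free_of_confounding :: "'a measure \<Rightarrow> (nat \<Rightarrow> 'a \<Rightarrow> real) \<Rightarrow> nat \<Rightarrow> bool" where
  "free_of_confounding M X m \<longleftrightarrow>
    (\<forall>Y. sq_integrable M Y \<and>
       (\<exists>g \<in> borel_measurable (\<Pi>\<^sub>M j\<in>{2..m}. borel).
          integrable M (\<lambda>\<omega>. (g (\<lambda>j\<in>{2..m}. X j \<omega>))^2) \<and>
          (AE \<omega> in M. real_cond_exp M (sigma_gen M X {1..m}) Y \<omega> = g (\<lambda>j\<in>{2..m}. X j \<omega>)))
     \<longrightarrow> partial_lin_mean_impact M X m Y = 0)"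

end

theory Submission imports Defs begin

definition ip :: "'a measure \<Rightarrow> ('a \<Rightarrow> real) \<Rightarrow> ('a \<Rightarrow> real) \<Rightarrow> real" where
  "ip M f g = (\<integral>x. f x * g x \<partial>M)"

lemma abs_mult_le_sq: "\<bar>(a::real) * b\<bar> \<le> a\<^sup>2 + b\<^sup>2"
proof -
  have "0 \<le> (\<bar>a\<bar> - \<bar>b\<bar>)\<^sup>2" by simp
  then have "2 * (\<bar>a\<bar> * \<bar>b\<bar>) \<le> a\<^sup>2 + b\<^sup>2" by (simp add: power2_diff)
  moreover have "0 \<le> \<bar>a\<bar> * \<bar>b\<bar>" by simp
  ultimately show ?thesis unfolding abs_mult by linarith
qed

lemma ip_comm: "ip M f g = ip M g f"
  unfolding ip_def by (simp add: mult.commute)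

lemma ip_cmult_left: "ip M (\<lambda>x. c * f x) g = c * ip M f g"
  unfolding ip_def by (simp add: mult.assoc)

context prob_space
begin

lemma sqi_meas: "sq_integrable M f \<Longrightarrow> f \<in> borel_measurable M"
  unfolding sq_integrable_def by simp

lemma sqi_int: "sq_integrable M f \<Longrightarrow> integrable M f"
  unfolding sq_integrable_def using square_integrable_imp_integrable by blast

lemma sqi_mult_int:
  assumes "sq_integrable M f" "sq_integrable M g"
  shows "integrable M (\<lambda>x. f x * g x)"
proof (rule Bochner_Integration.integrable_bound[where f="\<lambda>x. (f x)\<^sup>2 + (g x)\<^sup>2"])
  show "integrable M (\<lambda>x. (f x)\<^sup>2 + (g x)\<^sup>2)" using assms unfolding sq_integrable_def by auto
  show "(\<lambda>x. f x * g x) \<in> borel_measurable M" using assms unfolding sq_integrable_def by auto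
  show "AE x in M. norm (f x * g x) \<le> norm ((f x)\<^sup>2 + (g x)\<^sup>2)"
    using abs_mult_le_sq by (auto intro!: AE_I2)
qed

lemma sqi_add:
  assumes "sq_integrable M f" "sq_integrable M g"
  shows "sq_integrable M (\<lambda>x. f x + g x)"
proof -
  have "integrable M (\<lambda>x. (f x)\<^sup>2 + 2 * (f x * g x) + (g x)\<^sup>2)"
    using assms sqi_mult_int unfolding sq_integrable_def by auto
  moreover have "(\<lambda>x. (f x)\<^sup>2 + 2 * (f x * g x) + (g x)\<^sup>2) = (\<lambda>x. (f x + g x)\<^sup>2)"
    by (simp add: fun_eq_iff power2_sum)
  ultimately show ?thesis using assms unfolding sq_integrable_def by auto
qed

lemma sqi_cmult:
  assumes "sq_integrable M f"
  shows "sq_integrable M (\<lambda>x. c * f x)"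
proof -
  have "integrable M (\<lambda>x. c\<^sup>2 * (f x)\<^sup>2)"
    using assms unfolding sq_integrable_def by auto
  moreover have "(\<lambda>x. c\<^sup>2 * (f x)\<^sup>2) = (\<lambda>x. (c * f x)\<^sup>2)"
    by (simp add: fun_eq_iff power_mult_distrib)
  ultimately show ?thesis using assms unfolding sq_integrable_def by auto
qed

lemma sqi_diff:
  assumes "sq_integrable M f" "sq_integrable M g"
  shows "sq_integrable M (\<lambda>x. f x - g x)"
  using sqi_add[OF assms(1) sqi_cmult[OF assms(2), of "-1"]] by simp

lemma sqi_const: "sq_integrable M (\<lambda>x. c)"
  unfolding sq_integrable_def by auto

lemma sqi_sum:
  assumes "finite J" "\<And>j. j \<in> J \<Longrightarrow> sq_integrable M (f j)"
  shows "sq_integrable M (\<lambda>x. \<Sum>j\<in>J. f j x)"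
  using assms
proof (induction J rule: finite_induct)
  case empty
  then show ?case using sqi_const[of 0] by simp
next
  case (insert k J)
  then show ?case using sqi_add[of "f k" "\<lambda>x. \<Sum>j\<in>J. f j x"] by simp
qed

lemma sqi_lin:
  assumes "finite J" "\<And>j. j \<in> J \<Longrightarrow> sq_integrable M (Z j)"
  shows "sq_integrable M (\<lambda>x. k0 + (\<Sum>j\<in>J. k j * Z j x))"
  by (intro sqi_add sqi_const sqi_sum sqi_cmult assms)

lemma ip_add_left:
  assumes "sq_integrable M f" "sq_integrable M g" "sq_integrable M h"
  shows "ip M (\<lambda>x. f x + g x) h = ip M f h + ip M g h"
  unfolding ip_def using sqi_mult_int[OF assms(1,3)] sqi_mult_int[OF assms(2,3)]
  by (simp add: distrib_right)

lemma ip_diff_left: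
  assumes "sq_integrable M f" "sq_integrable M g" "sq_integrable M h"
  shows "ip M (\<lambda>x. f x - g x) h = ip M f h - ip M g h"
  unfolding ip_def using sqi_mult_int[OF assms(1,3)] sqi_mult_int[OF assms(2,3)]
  by (simp add: left_diff_distrib)

lemma ip_sum_left:
  assumes "finite J" "\<And>j. j \<in> J \<Longrightarrow> sq_integrable M (f j)" "sq_integrable M h"
  shows "ip M (\<lambda>x. \<Sum>j\<in>J. f j x) h = (\<Sum>j\<in>J. ip M (f j) h)"
  unfolding ip_def using assms sqi_mult_int
  by (simp add: sum_distrib_right integral_sum)

lemma ip_lin_left:
  assumes "finite J" "\<And>j. j \<in> J \<Longrightarrow> sq_integrable M (Z j)" "sq_integrable M h"
  shows "ip M (\<lambda>x. k0 + (\<Sum>j\<in>J. k j * Z j x)) h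
     = k0 * (\<integral>x. h x \<partial>M) + (\<Sum>j\<in>J. k j * ip M (Z j) h)"
proof -
  have "ip M (\<lambda>x. k0 + (\<Sum>j\<in>J. k j * Z j x)) h = ip M (\<lambda>x. k0) h + ip M (\<lambda>x. \<Sum>j\<in>J. k j * Z j x) h"
    by (intro ip_add_left sqi_const sqi_sum sqi_cmult assms)
  also have "ip M (\<lambda>x. \<Sum>j\<in>J. k j * Z j x) h = (\<Sum>j\<in>J. ip M (\<lambda>x. k j * Z j x) h)"
    by (intro ip_sum_left sqi_cmult assms)
  also have "ip M (\<lambda>x. k0) h = k0 * (\<integral>x. h x \<partial>M)"
    unfolding ip_def by simp
  finally show ?thesis by (simp add: ip_cmult_left)
qed

lemma ip_self_zero:
  assumes "sq_integrable M f" "ip M f f = 0"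
  shows "AE x in M. f x = 0"
proof -
  have "(\<integral>x. (f x)\<^sup>2 \<partial>M) = 0" using assms(2) unfolding ip_def by (simp add: power2_eq_square)
  then have "AE x in M. (f x)\<^sup>2 = 0"
    using assms(1) unfolding sq_integrable_def
    by (subst (asm) integral_nonneg_eq_0_iff_AE) auto
  then show ?thesis by auto
qed

lemma ip_zero_AE:
  assumes "AE x in M. f x = 0"
  shows "ip M f g = 0"
  unfolding ip_def using assms by (auto intro!: integral_eq_zero_AE)

lemma proj_exists:
  assumes "finite J" "\<And>j. j \<in> J \<Longrightarrow> sq_integrable M (Z j)" "sq_integrable M W"
  shows "\<exists>c. \<forall>i\<in>J. ip M (\<lambda>x. W x - (\<Sum>j\<in>J. c j * Z j x)) (Z i) = 0"
  using assms
proof (induction J arbitrary: W rule: finite_induct)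
  case empty
  then show ?case by simp
next
  case (insert k J)
  have ZJ: "\<And>j. j \<in> J \<Longrightarrow> sq_integrable M (Z j)" and Zk: "sq_integrable M (Z k)"
    using insert.prems by auto
  obtain c where c: "\<forall>i\<in>J. ip M (\<lambda>x. W x - (\<Sum>j\<in>J. c j * Z j x)) (Z i) = 0"
    using insert.IH[OF ZJ insert.prems(2)] by blast
  obtain d where d: "\<forall>i\<in>J. ip M (\<lambda>x. Z k x - (\<Sum>j\<in>J. d j * Z j x)) (Z i) = 0"
    using insert.IH[OF ZJ Zk] by blast
  define W' where "W' = (\<lambda>x. W x - (\<Sum>j\<in>J. c j * Z j x))"
  define V where "V = (\<lambda>x. Z k x - (\<Sum>j\<in>J. d j * Z j x))"
  have sW': "sq_integrable M W'" unfolding W'_def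
    by (intro sqi_diff sqi_sum sqi_cmult ZJ insert.prems insert.hyps)
  have sV: "sq_integrable M V" unfolding V_def
    by (intro sqi_diff sqi_sum sqi_cmult ZJ Zk insert.hyps)
  have cW': "\<And>i. i \<in> J \<Longrightarrow> ip M W' (Z i) = 0" using c W'_def by auto
  have cV: "\<And>i. i \<in> J \<Longrightarrow> ip M V (Z i) = 0" using d V_def by auto
  define t where "t = (if ip M V V = 0 then 0 else ip M W' V / ip M V V)"
  define c' where "c' = (\<lambda>j. if j = k then t else c j - t * d j)"
  have eq: "(\<lambda>x. W x - (\<Sum>j\<in>insert k J. c' j * Z j x)) = (\<lambda>x. W' x - t * V x)"
  proof
    fix x
    have "(\<Sum>j\<in>insert k J. c' j * Z j x) = t * Z k x + (\<Sum>j\<in>J. (c j - t * d j) * Z j x)"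
      using insert.hyps by (simp add: c'_def cong: sum.cong) (auto intro!: sum.cong)
    also have "(\<Sum>j\<in>J. (c j - t * d j) * Z j x) = (\<Sum>j\<in>J. c j * Z j x) - t * (\<Sum>j\<in>J. d j * Z j x)"
      by (simp add: left_diff_distrib sum_subtractf sum_distrib_left mult.assoc)
    finally show "W x - (\<Sum>j\<in>insert k J. c' j * Z j x) = W' x - t * V x"
      unfolding W'_def V_def by (simp add: algebra_simps)
  qed
  have lin: "\<And>i. i \<in> insert k J \<Longrightarrow> ip M (\<lambda>x. W' x - t * V x) (Z i) = ip M W' (Z i) - t * ip M V (Z i)"
    using insert.prems by (subst ip_diff_left) (auto intro!: sqi_cmult sW' sV simp: ip_cmult_left)
  have VV: "ip M V V = ip M V (Z k)"
  proof -
    have "ip M V V = ip M (\<lambda>x. Z k x - (\<Sum>j\<in>J. d j * Z j x)) V" by (simp add: V_def)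
    also have "\<dots> = ip M (Z k) V - ip M (\<lambda>x. \<Sum>j\<in>J. d j * Z j x) V"
      by (intro ip_diff_left Zk sV sqi_sum sqi_cmult ZJ insert.hyps)
    also have "ip M (\<lambda>x. \<Sum>j\<in>J. d j * Z j x) V = (\<Sum>j\<in>J. ip M (\<lambda>x. d j * Z j x) V)"
      by (intro ip_sum_left sV sqi_cmult ZJ insert.hyps)
    also have "\<dots> = 0" using cV by (simp add: ip_cmult_left ip_comm)
    finally show ?thesis by (simp add: ip_comm)
  qed
  have WV: "ip M W' V = ip M W' (Z k)"
  proof -
    have "ip M V W' = ip M (\<lambda>x. Z k x - (\<Sum>j\<in>J. d j * Z j x)) W'" by (simp add: V_def)
    also have "\<dots> = ip M (Z k) W' - ip M (\<lambda>x. \<Sum>j\<in>J. d j * Z j x) W'"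
      by (intro ip_diff_left Zk sW' sqi_sum sqi_cmult ZJ insert.hyps)
    also have "ip M (\<lambda>x. \<Sum>j\<in>J. d j * Z j x) W' = (\<Sum>j\<in>J. ip M (\<lambda>x. d j * Z j x) W')"
      by (intro ip_sum_left sW' sqi_cmult ZJ insert.hyps)
    also have "\<dots> = 0" using cW' by (simp add: ip_cmult_left ip_comm)
    finally show ?thesis by (simp add: ip_comm)
  qed
  have "\<forall>i\<in>insert k J. ip M (\<lambda>x. W x - (\<Sum>j\<in>insert k J. c' j * Z j x)) (Z i) = 0"
  proof
    fix i assume i: "i \<in> insert k J"
    show "ip M (\<lambda>x. W x - (\<Sum>j\<in>insert k J. c' j * Z j x)) (Z i) = 0"
    proof (cases "i = k")
      case True
      have "ip M W' (Z k) - t * ip M V (Z k) = 0"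
      proof (cases "ip M V V = 0")
        case True
        then have "AE x in M. V x = 0" using ip_self_zero sV by blast
        then have "ip M V W' = 0" by (rule ip_zero_AE)
        then show ?thesis using True WV VV t_def by (simp add: ip_comm)
      next
        case False
        then show ?thesis using WV VV t_def by simp
      qed
      then show ?thesis using lin[OF i] eq True by simp
    next
      case False
      then have "i \<in> J" using i by simp
      then show ?thesis using lin[OF i] eq cW' cV by simp
    qed
  qed
  then show ?case by blast
qed

lemma ip_le:
  assumes "sq_integrable M f" "sq_integrable M g"
  shows "ip M f g \<le> ((\<integral>x. (f x)\<^sup>2 \<partial>M) + (\<integral>x. (g x)\<^sup>2 \<partial>M)) / 2"
proof -
  have "ip M f g \<le> (\<integral>x. ((f x)\<^sup>2 + (g x)\<^sup>2) / 2 \<partial>M)"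
    unfolding ip_def
  proof (rule integral_mono)
    show "integrable M (\<lambda>x. f x * g x)" using sqi_mult_int assms by blast
    show "integrable M (\<lambda>x. ((f x)\<^sup>2 + (g x)\<^sup>2) / 2)" using assms unfolding sq_integrable_def by auto
    fix x
    have "0 \<le> (f x - g x)\<^sup>2" by simp
    then show "f x * g x \<le> ((f x)\<^sup>2 + (g x)\<^sup>2) / 2" by (simp add: power2_diff)
  qed
  also have "\<dots> = ((\<integral>x. (f x)\<^sup>2 \<partial>M) + (\<integral>x. (g x)\<^sup>2 \<partial>M)) / 2"
    using assms unfolding sq_integrable_def by simp
  finally show ?thesis .
qed

end

lemma H_neg:
  assumes "\<delta> \<in> H_lin M X m"
  shows "(\<lambda>x. - \<delta> x) \<in> H_lin M X m"
proof -
  obtain \<eta> where e: "\<delta> = lin_comb X m \<eta>" "(\<integral>\<omega>. \<delta> \<omega> \<partial>M) = 0"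
      "(\<integral>\<omega>. (\<delta> \<omega>)^2 \<partial>M) = 1" "\<forall>j\<in>{2..m}. (\<integral>\<omega>. X j \<omega> * \<delta> \<omega> \<partial>M) = 0"
    using assms unfolding H_lin_def by blast
  have eq: "(\<lambda>x. - \<delta> x) = lin_comb X m (\<lambda>j. - \<eta> j)"
    using e(1) by (simp add: lin_comb_def sum_negf fun_eq_iff)
  have "(\<integral>\<omega>. - \<delta> \<omega> \<partial>M) = 0 \<and>
     (\<integral>\<omega>. (- \<delta> \<omega>)^2 \<partial>M) = 1 \<and> (\<forall>j\<in>{2..m}. (\<integral>\<omega>. X j \<omega> * - \<delta> \<omega> \<partial>M) = 0)"
    using e(2-4) by simp
  then show ?thesis using eq unfolding H_lin_def by blast
qed

lemma lin_meas:
  fixes Z :: "nat \<Rightarrow> 'a \<Rightarrow> real"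
  assumes "\<And>j. j \<in> J \<Longrightarrow> Z j \<in> borel_measurable N"
  shows "(\<lambda>x. k0 + (\<Sum>j\<in>J. k j * Z j x)) \<in> borel_measurable N"
proof -
  have "(\<lambda>x. k j * Z j x) \<in> borel_measurable N" if j: "j \<in> J" for j
    using assms j by (intro borel_measurable_times borel_measurable_const) auto
  then have "(\<lambda>x. \<Sum>j\<in>J. k j * Z j x) \<in> borel_measurable N"
    by (rule borel_measurable_sum)
  then show ?thesis by simp
qed

lemma sg_space: "space (sigma_gen M X I) = space M"
  by (simp add: sigma_gen_def)

lemma sg_map_meas: "(\<lambda>\<omega>. \<lambda>j\<in>I. X j \<omega>) \<in> measurable (sigma_gen M X I) (\<Pi>\<^sub>M j\<in>I. borel)"
  unfolding sigma_gen_def by (rule measurable_vimage_algebra1) (auto simp: space_PiM)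

lemma sg_comp: "g \<in> borel_measurable (\<Pi>\<^sub>M j\<in>I. borel) \<Longrightarrow>
   (\<lambda>\<omega>. g (\<lambda>j\<in>I. X j \<omega>)) \<in> borel_measurable (sigma_gen M X I)"
  using measurable_compose[OF sg_map_meas] by blast

lemma sg_X: assumes "j \<in> I" shows "X j \<in> borel_measurable (sigma_gen M X I)"
proof -
  have "(\<lambda>\<omega>. (\<lambda>j\<in>I. X j \<omega>) j) \<in> borel_measurable (sigma_gen M X I)"
    using measurable_compose[OF sg_map_meas measurable_component_singleton[OF assms]] by simp
  moreover have "(\<lambda>\<omega>. (\<lambda>j\<in>I. X j \<omega>) j) = X j" using assms by auto
  ultimately show ?thesis by simp
qed

lemma sg_restr: "I \<subseteq> K \<Longrightarrow> (\<lambda>\<omega>. \<lambda>j\<in>I. X j \<omega>) \<in> measurable (sigma_gen M X K) (\<Pi>\<^sub>M j\<in>I. borel)"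
  by (rule measurable_restrict) (auto intro: sg_X)

lemma sg_sub:
  assumes "\<And>j. j \<in> I \<Longrightarrow> X j \<in> borel_measurable M"
  shows "subalgebra M (sigma_gen M X I)"
  unfolding subalgebra_def
proof
  show "space (sigma_gen M X I) = space M" by (rule sg_space)
  have "(\<lambda>\<omega>. \<lambda>j\<in>I. X j \<omega>) \<in> measurable M (\<Pi>\<^sub>M j\<in>I. borel)"
    by (rule measurable_restrict) (rule assms)
  then show "sets (sigma_gen M X I) \<subseteq> sets M"
    unfolding sigma_gen_def by (rule sets_image_in_sets[OF refl])
qed

lemma sg_sfs:
  assumes "prob_space M" "\<And>j. j \<in> I \<Longrightarrow> X j \<in> borel_measurable M"
  shows "sigma_finite_subalgebra M (sigma_gen M X I)"
proof -
  interpret prob_space M by fact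
  have "finite_measure_subalgebra M (sigma_gen M X I)"
    unfolding finite_measure_subalgebra_def finite_measure_subalgebra_axioms_def
    using finite_measure_axioms sg_sub[OF assms(2)] by (rule conjI)
  then show ?thesis by (rule finite_measure_subalgebra_is_sigma_finite)
qed

theorem mainTheorem4:
  fixes M :: "'a measure" and X :: "nat \<Rightarrow> 'a \<Rightarrow> real" and m :: nat
  assumes "prob_space M"
    and "m \<ge> 2"
    and "\<forall>j\<in>{1..m}. sq_integrable M (X j)"
  shows "free_of_confounding M X m \<longleftrightarrow>
    (\<exists>\<beta> :: nat \<Rightarrow> real. AE \<omega> in M.
       real_cond_exp M (sigma_gen M X {2..m}) (X 1) \<omega> = \<beta> 0 + (\<Sum>j = 2..m. \<beta> j * X j \<omega>))"
proof -
  interpret P: prob_space M by fact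
  have Xm: "\<And>j. j \<in> {1..m} \<Longrightarrow> sq_integrable M (X j)" using assms(3) by auto
  have XmM: "\<And>j. j \<in> {1..m} \<Longrightarrow> X j \<in> borel_measurable M" using Xm P.sqi_meas by blast
  have X1: "sq_integrable M (X 1)" using Xm assms(2) by auto
  have X2m: "\<And>j. j \<in> {2..m} \<Longrightarrow> sq_integrable M (X j)" using Xm by auto
  define F where "F = sigma_gen M X {1..m}"
  define G where "G = sigma_gen M X {2..m}"
  interpret SF: sigma_finite_subalgebra M F unfolding F_def by (rule sg_sfs[OF assms(1) XmM])
  interpret SG: sigma_finite_subalgebra M G unfolding G_def by (rule sg_sfs) (auto intro: assms(1) XmM)
  have XG: "\<And>j. j \<in> {2..m} \<Longrightarrow> X j \<in> borel_measurable G" unfolding G_def by (rule sg_X)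
  have XF: "\<And>j. j \<in> {1..m} \<Longrightarrow> X j \<in> borel_measurable F" unfolding F_def by (rule sg_X)
  have lc_sqi: "\<And>\<eta>. sq_integrable M (lin_comb X m \<eta>)"
    unfolding lin_comb_def by (intro P.sqi_lin Xm) auto
  have lc_F: "\<And>\<eta>. lin_comb X m \<eta> \<in> borel_measurable F"
    unfolding lin_comb_def by (intro lin_meas XF)
  have GM: "\<And>f. f \<in> borel_measurable G \<Longrightarrow> f \<in> borel_measurable M"
    using SG.subalg measurable_from_subalg by blast

  define Z where "Z = (\<lambda>j::nat. if j = 0 then (\<lambda>_::'a. 1::real) else X j)"
  define J where "J = insert (0::nat) {2..m}"
  have fin: "finite J" unfolding J_def by simp
  have ZJ: "sq_integrable M (Z j)" if j: "j \<in> J" for j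
  proof (cases "j = 0")
    case True
    then show ?thesis unfolding Z_def using P.sqi_const by simp
  next
    case False
    then show ?thesis unfolding Z_def using X2m j J_def by simp
  qed
  have "\<exists>c. \<forall>i\<in>J. ip M (\<lambda>x. X 1 x - (\<Sum>j\<in>J. c j * Z j x)) (Z i) = 0"
    by (rule P.proj_exists[OF fin ZJ X1])
  then obtain c where c: "\<forall>i\<in>J. ip M (\<lambda>x. X 1 x - (\<Sum>j\<in>J. c j * Z j x)) (Z i) = 0"
    by (elim exE)
  define a where "a = (\<lambda>x. c 0 + (\<Sum>j = 2..m. c j * X j x))"
  have aeq: "(\<Sum>j\<in>J. c j * Z j x) = a x" for x
  proof -
    have "(\<Sum>j\<in>J. c j * Z j x) = c 0 * Z 0 x + (\<Sum>j = 2..m. c j * Z j x)"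
      unfolding J_def by simp
    moreover have "(\<Sum>j = 2..m. c j * Z j x) = (\<Sum>j = 2..m. c j * X j x)"
      by (rule sum.cong) (auto simp: Z_def)
    ultimately show "(\<Sum>j\<in>J. c j * Z j x) = a x"
      unfolding a_def by (simp add: Z_def)
  qed
  define U where "U = (\<lambda>x. X 1 x - a x)"
  have cU: "ip M U (Z i) = 0" if i: "i \<in> J" for i
    using bspec[OF c i] unfolding U_def aeq .
  have a_sqi: "sq_integrable M a" unfolding a_def by (intro P.sqi_lin X2m) auto
  have a_G: "a \<in> borel_measurable G" unfolding a_def by (intro lin_meas XG)
  have U_sqi: "sq_integrable M U" unfolding U_def by (intro P.sqi_diff X1 a_sqi)
  have U1: "ip M U (\<lambda>_. 1) = 0" using cU[of 0] unfolding J_def Z_def by simp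
  have UX: "\<And>j. j \<in> {2..m} \<Longrightarrow> ip M U (X j) = 0"
  proof -
    fix j assume j: "j \<in> {2..m}"
    then have "ip M U (Z j) = 0" using cU unfolding J_def by simp
    then show "ip M U (X j) = 0" using j unfolding Z_def by simp
  qed
  show ?thesis
  proof
    assume foc: "free_of_confounding M X m"
    show "\<exists>\<beta>. AE \<omega> in M. real_cond_exp M (sigma_gen M X {2..m}) (X 1) \<omega> = \<beta> 0 + (\<Sum>j = 2..m. \<beta> j * X j \<omega>)"
    proof (cases "ip M U U = 0")
      case True
      then have "AE x in M. U x = 0" using P.ip_self_zero U_sqi by blast
      then have "AE x in M. X 1 x = a x" unfolding U_def by auto
      then have "AE x in M. real_cond_exp M G (X 1) x = real_cond_exp M G a x"
        using SG.real_cond_exp_cong P.sqi_meas X1 a_sqi by blast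
      moreover have "AE x in M. real_cond_exp M G a x = a x"
        using SG.real_cond_exp_F_meas P.sqi_int a_sqi a_G by blast
      ultimately have "AE x in M. real_cond_exp M G (X 1) x = a x" by auto
      then show ?thesis unfolding G_def a_def by blast
    next
      case False
      have UUpos: "ip M U U > 0"
      proof -
        have "ip M U U = (\<integral>x. (U x)\<^sup>2 \<partial>M)" unfolding ip_def by (simp add: power2_eq_square)
        also have "\<dots> \<ge> 0" by simp
        finally show ?thesis using False by simp
      qed
      define s where "s = sqrt (ip M U U)"
      have spos: "s > 0" unfolding s_def using UUpos by simp
      have ss: "s * s = ip M U U" unfolding s_def using UUpos by simp
      define \<eta> where "\<eta> = (\<lambda>j::nat. if j = 0 then - c 0 / s else if j = 1 then 1 / s else - c j / s)"
      define \<delta> where "\<delta> = lin_comb X m \<eta>"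
      have m1: "{1..m} = insert 1 {2..m}" using assms(2) by auto
      have \<delta>eq: "\<delta> = (\<lambda>x. (1/s) * U x)"
      proof
        fix x
        have "(\<Sum>j = 2..m. \<eta> j * X j x) = (\<Sum>j = 2..m. - (c j * X j x / s))"
          by (rule sum.cong) (auto simp: \<eta>_def)
        also have "\<dots> = - ((\<Sum>j = 2..m. c j * X j x) / s)"
          by (simp add: sum_negf sum_divide_distrib)
        finally have "(\<Sum>j = 2..m. \<eta> j * X j x) = - (\<Sum>j = 2..m. c j * X j x) / s" by simp
        then show "\<delta> x = (1/s) * U x"
          unfolding \<delta>_def lin_comb_def m1 U_def a_def using spos
          by (simp add: \<eta>_def field_simps)
      qed
      have \<delta>H: "\<delta> \<in> H_lin M X m"
        unfolding H_lin_def
      proof (intro CollectI exI conjI ballI)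
        show "\<delta> = lin_comb X m \<eta>" by (simp add: \<delta>_def)
        have "(\<integral>\<omega>. U \<omega> \<partial>M) = 0" using U1 unfolding ip_def by simp
        then show "(\<integral>\<omega>. \<delta> \<omega> \<partial>M) = 0" unfolding \<delta>eq by simp
        have "(\<integral>\<omega>. (\<delta> \<omega>)\<^sup>2 \<partial>M) = (1/s) * ((1/s) * ip M U U)"
          unfolding \<delta>eq ip_def by (simp add: power2_eq_square algebra_simps)
        then show "(\<integral>\<omega>. (\<delta> \<omega>)\<^sup>2 \<partial>M) = 1" using ss spos False by (simp add: field_simps)
        fix j assume j: "j \<in> {2..m}"
        have "(\<integral>\<omega>. X j \<omega> * \<delta> \<omega> \<partial>M) = (1/s) * ip M U (X j)"
          unfolding \<delta>eq ip_def by (simp add: algebra_simps)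
        then show "(\<integral>\<omega>. X j \<omega> * \<delta> \<omega> \<partial>M) = 0" using UX[OF j] by simp
      qed
      have \<delta>sqi: "sq_integrable M \<delta>" unfolding \<delta>_def by (rule lc_sqi)
      have int_eq: "(\<integral>x\<in>A. X 1 x \<partial>M) = (\<integral>x\<in>A. a x \<partial>M)" if A: "A \<in> sets G" for A
      proof -
        define \<phi> where "\<phi> = (\<lambda>\<omega>. \<lambda>j\<in>{2..m}. X j \<omega>)"
        have \<phi>sp: "\<phi> \<in> space M \<rightarrow> space (\<Pi>\<^sub>M j\<in>{2..m}. (borel :: real measure))"
          unfolding \<phi>_def by (auto simp: space_PiM)
        obtain B where B: "B \<in> sets (\<Pi>\<^sub>M j\<in>{2..m}. (borel :: real measure))" "A = \<phi> -` B \<inter> space M"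
          using A sets_vimage_algebra2[OF \<phi>sp] unfolding G_def sigma_gen_def \<phi>_def by auto
        define Y where "Y = (\<lambda>\<omega>. indicator B (\<phi> \<omega>) :: real)"
        have \<phi>M: "\<phi> \<in> measurable M (\<Pi>\<^sub>M j\<in>{2..m}. borel)"
          unfolding \<phi>_def by (rule measurable_restrict) (auto intro: XmM)
        have \<phi>F: "\<phi> \<in> measurable F (\<Pi>\<^sub>M j\<in>{2..m}. borel)"
          unfolding \<phi>_def F_def by (rule sg_restr) auto
        have gB: "(indicator B :: _ \<Rightarrow> real) \<in> borel_measurable (\<Pi>\<^sub>M j\<in>{2..m}. borel)"
          using B(1) by simp
        have YM: "Y \<in> borel_measurable M" unfolding Y_def using measurable_compose[OF \<phi>M gB] .
        have YF: "Y \<in> borel_measurable F" unfolding Y_def using measurable_compose[OF \<phi>F gB] .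
        have Y2: "integrable M (\<lambda>\<omega>. (Y \<omega>)\<^sup>2)"
        proof (rule P.integrable_const_bound[where B=1])
          show "AE x in M. norm ((Y x)\<^sup>2) \<le> 1" by (auto simp: Y_def indicator_def)
          show "(\<lambda>\<omega>. (Y \<omega>)\<^sup>2) \<in> borel_measurable M" using YM by simp
        qed
        have Ysqi: "sq_integrable M Y" unfolding sq_integrable_def using YM Y2 by simp
        have ae: "AE \<omega> in M. real_cond_exp M F Y \<omega> = Y \<omega>"
          by (rule SF.real_cond_exp_F_meas[OF P.sqi_int[OF Ysqi] YF])
        have prem: "sq_integrable M Y \<and> (\<exists>g\<in>borel_measurable (\<Pi>\<^sub>M j\<in>{2..m}. borel).
          integrable M (\<lambda>\<omega>. (g (\<lambda>j\<in>{2..m}. X j \<omega>))\<^sup>2) \<and>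
          (AE \<omega> in M. real_cond_exp M (sigma_gen M X {1..m}) Y \<omega> = g (\<lambda>j\<in>{2..m}. X j \<omega>)))"
        proof (intro conjI bexI[of _ "indicator B :: _ \<Rightarrow> real"])
          show "sq_integrable M Y" by (rule Ysqi)
          show "(indicator B :: _ \<Rightarrow> real) \<in> borel_measurable (\<Pi>\<^sub>M j\<in>{2..m}. borel)" by (rule gB)
          show "integrable M (\<lambda>\<omega>. (indicator B (\<lambda>j\<in>{2..m}. X j \<omega>) :: real)\<^sup>2)"
            using Y2 unfolding Y_def \<phi>_def .
          show "AE \<omega> in M. real_cond_exp M (sigma_gen M X {1..m}) Y \<omega> = indicator B (\<lambda>j\<in>{2..m}. X j \<omega>)"
            using ae unfolding F_def Y_def \<phi>_def .
        qed
        have "partial_lin_mean_impact M X m Y = 0"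
          using foc prem unfolding free_of_confounding_def by blast
        moreover have Hne: "H_lin M X m \<noteq> {}" using \<delta>H by blast
        ultimately have Sup0: "Sup ((\<lambda>\<delta>. \<integral>\<omega>. Y \<omega> * \<delta> \<omega> \<partial>M) ` H_lin M X m) = 0"
          unfolding partial_lin_mean_impact_def if_not_P[OF Hne] by simp
        have bdd: "bdd_above ((\<lambda>\<delta>. \<integral>\<omega>. Y \<omega> * \<delta> \<omega> \<partial>M) ` H_lin M X m)"
        proof (rule bdd_aboveI2)
          fix d assume d: "d \<in> H_lin M X m"
          then obtain \<eta>' where "d = lin_comb X m \<eta>'" "(\<integral>\<omega>. (d \<omega>)\<^sup>2 \<partial>M) = 1"
            unfolding H_lin_def by blast
          then show "(\<integral>\<omega>. Y \<omega> * d \<omega> \<partial>M) \<le> ((\<integral>x. (Y x)\<^sup>2 \<partial>M) + 1) / 2"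
            using P.ip_le[OF Ysqi lc_sqi[of \<eta>']] unfolding ip_def by simp
        qed
        have le1: "ip M Y \<delta> \<le> 0"
          using cSup_upper[OF imageI[OF \<delta>H] bdd] Sup0 unfolding ip_def by simp
        have le2: "ip M Y (\<lambda>x. - \<delta> x) \<le> 0"
          using cSup_upper[OF imageI[OF H_neg[OF \<delta>H]] bdd] Sup0 unfolding ip_def by simp
        have "ip M Y (\<lambda>x. - \<delta> x) = - ip M Y \<delta>" unfolding ip_def by simp
        then have "ip M Y \<delta> = 0" using le1 le2 by simp
        moreover have "ip M Y \<delta> = (1/s) * ip M U Y" unfolding \<delta>eq
          by (simp only: ip_comm[of M Y] ip_cmult_left)
        ultimately have "ip M U Y = 0" using spos by simp
        then have "ip M (X 1) Y = ip M a Y" unfolding U_def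
          using P.ip_diff_left[OF X1 a_sqi Ysqi] by simp
        moreover have "(\<integral>x\<in>A. X 1 x \<partial>M) = ip M (X 1) Y"
          unfolding set_lebesgue_integral_def ip_def
        proof (rule Bochner_Integration.integral_cong)
          fix x assume "x \<in> space M"
          then show "indicator A x *\<^sub>R X 1 x = X 1 x * Y x"
            by (simp add: B(2) Y_def indicator_def)
        qed simp
        moreover have "(\<integral>x\<in>A. a x \<partial>M) = ip M a Y"
          unfolding set_lebesgue_integral_def ip_def
        proof (rule Bochner_Integration.integral_cong)
          fix x assume "x \<in> space M"
          then show "indicator A x *\<^sub>R a x = a x * Y x"
            by (simp add: B(2) Y_def indicator_def)
        qed simp
        ultimately show ?thesis by simp
      qed
      have "AE x in M. real_cond_exp M G (X 1) x = a x"
        by (rule SG.real_cond_exp_charact) (use int_eq P.sqi_int X1 a_sqi a_G in auto)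
      then show ?thesis unfolding G_def a_def by blast
    qed
  next
    assume "\<exists>\<beta>. AE \<omega> in M. real_cond_exp M (sigma_gen M X {2..m}) (X 1) \<omega> = \<beta> 0 + (\<Sum>j = 2..m. \<beta> j * X j \<omega>)"
    then obtain \<beta> where \<beta>: "AE \<omega> in M. real_cond_exp M G (X 1) \<omega> = \<beta> 0 + (\<Sum>j = 2..m. \<beta> j * X j \<omega>)"
      unfolding G_def by blast
    define a' where "a' = (\<lambda>\<omega>. \<beta> 0 + (\<Sum>j = 2..m. \<beta> j * X j \<omega>))"
    have a'_sqi: "sq_integrable M a'" unfolding a'_def by (intro P.sqi_lin X2m) auto
    have K: "ip M f (X 1) = ip M f a'" if f: "sq_integrable M f" "f \<in> borel_measurable G" for f
    proof -
      have "ip M f (X 1) = (\<integral>x. f x * real_cond_exp M G (X 1) x \<partial>M)"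
        unfolding ip_def
        by (rule SG.real_cond_exp_intg(2)[OF P.sqi_mult_int[OF f(1) X1] f(2) P.sqi_meas[OF X1], symmetric])
      also have "\<dots> = ip M f a'"
        unfolding ip_def
        proof (rule integral_cong_AE)
          show "(\<lambda>x. f x * real_cond_exp M G (X 1) x) \<in> borel_measurable M"
            by (rule borel_measurable_times[OF GM[OF f(2)] borel_measurable_cond_exp2])
          show "(\<lambda>x. f x * a' x) \<in> borel_measurable M"
            by (rule borel_measurable_times[OF GM[OF f(2)] P.sqi_meas[OF a'_sqi]])
          show "AE x in M. f x * real_cond_exp M G (X 1) x = f x * a' x"
            using \<beta> by eventually_elim (simp add: a'_def)
        qed
      finally show ?thesis .
    qed
    show "free_of_confounding M X m"
      unfolding free_of_confounding_def
    proof (intro allI impI)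
      fix Y assume "sq_integrable M Y \<and> (\<exists>g\<in>borel_measurable (\<Pi>\<^sub>M j\<in>{2..m}. borel).
          integrable M (\<lambda>\<omega>. (g (\<lambda>j\<in>{2..m}. X j \<omega>))\<^sup>2) \<and>
          (AE \<omega> in M. real_cond_exp M (sigma_gen M X {1..m}) Y \<omega> = g (\<lambda>j\<in>{2..m}. X j \<omega>)))"
      then obtain g where Ysqi: "sq_integrable M Y" and g: "g \<in> borel_measurable (\<Pi>\<^sub>M j\<in>{2..m}. borel)"
        and g2: "integrable M (\<lambda>\<omega>. (g (\<lambda>j\<in>{2..m}. X j \<omega>))\<^sup>2)"
        and gae: "AE \<omega> in M. real_cond_exp M F Y \<omega> = g (\<lambda>j\<in>{2..m}. X j \<omega>)"
        unfolding F_def by blast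
      define h where "h = (\<lambda>\<omega>. g (\<lambda>j\<in>{2..m}. X j \<omega>))"
      have \<phi>M: "(\<lambda>\<omega>. \<lambda>j\<in>{2..m}. X j \<omega>) \<in> measurable M (\<Pi>\<^sub>M j\<in>{2..m}. borel)"
        by (rule measurable_restrict) (auto intro: XmM)
      have hM: "h \<in> borel_measurable M" unfolding h_def
        using measurable_compose[OF \<phi>M g] .
      have hsqi: "sq_integrable M h" unfolding sq_integrable_def using hM g2 h_def by simp
      have hG: "h \<in> borel_measurable G" unfolding h_def G_def by (rule sg_comp[OF g])
      have zero: "(\<integral>\<omega>. Y \<omega> * \<delta> \<omega> \<partial>M) = 0" if \<delta>H: "\<delta> \<in> H_lin M X m" for \<delta>
      proof -
        obtain \<eta> where e: "\<delta> = lin_comb X m \<eta>" "(\<integral>\<omega>. \<delta> \<omega> \<partial>M) = 0"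
            "\<forall>j\<in>{2..m}. (\<integral>\<omega>. X j \<omega> * \<delta> \<omega> \<partial>M) = 0"
          using \<delta>H unfolding H_lin_def by blast
        have \<delta>sqi: "sq_integrable M \<delta>" using e(1) lc_sqi by simp
        have \<delta>F: "\<delta> \<in> borel_measurable F" using e(1) lc_F by simp
        have "(\<integral>\<omega>. Y \<omega> * \<delta> \<omega> \<partial>M) = (\<integral>\<omega>. \<delta> \<omega> * Y \<omega> \<partial>M)" by (simp add: mult.commute)
        also have "\<dots> = (\<integral>\<omega>. \<delta> \<omega> * real_cond_exp M F Y \<omega> \<partial>M)"
          by (rule SF.real_cond_exp_intg(2)[OF P.sqi_mult_int[OF \<delta>sqi Ysqi] \<delta>F P.sqi_meas[OF Ysqi], symmetric])
        also have "\<dots> = ip M \<delta> h"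
          unfolding ip_def
          proof (rule integral_cong_AE)
          show "(\<lambda>x. \<delta> x * real_cond_exp M F Y x) \<in> borel_measurable M"
            by (rule borel_measurable_times[OF P.sqi_meas[OF \<delta>sqi] borel_measurable_cond_exp2])
          show "(\<lambda>x. \<delta> x * h x) \<in> borel_measurable M"
            by (rule borel_measurable_times[OF P.sqi_meas[OF \<delta>sqi] hM])
          show "AE x in M. \<delta> x * real_cond_exp M F Y x = \<delta> x * h x"
            using gae by eventually_elim (simp add: h_def)
        qed
        finally have Yd: "(\<integral>\<omega>. Y \<omega> * \<delta> \<omega> \<partial>M) = ip M \<delta> h" .
        define r where "r = (\<lambda>\<omega>. (\<eta> 0 + \<eta> 1 * \<beta> 0) + (\<Sum>j\<in>{2..m}. (\<eta> j + \<eta> 1 * \<beta> j) * X j \<omega>))"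
        define D where "D = (\<lambda>\<omega>. X 1 \<omega> - a' \<omega>)"
        have m1: "{1..m} = insert 1 {2..m}" using assms(2) by auto
        have \<delta>r: "\<delta> = (\<lambda>\<omega>. \<eta> 1 * D \<omega> + r \<omega>)"
        proof
          fix \<omega>
          have s1: "(\<Sum>j=2..m. (\<eta> j + \<eta> 1 * \<beta> j) * X j \<omega>)
              = (\<Sum>j=2..m. \<eta> j * X j \<omega>) + \<eta> 1 * (\<Sum>j=2..m. \<beta> j * X j \<omega>)"
          proof -
            have "(\<Sum>j=2..m. (\<eta> j + \<eta> 1 * \<beta> j) * X j \<omega>)
                = (\<Sum>j=2..m. \<eta> j * X j \<omega> + \<eta> 1 * (\<beta> j * X j \<omega>))"
              by (rule sum.cong) (simp_all add: distrib_right mult.assoc)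
            also have "\<dots> = (\<Sum>j=2..m. \<eta> j * X j \<omega>) + (\<Sum>j=2..m. \<eta> 1 * (\<beta> j * X j \<omega>))"
              by (rule sum.distrib)
            also have "(\<Sum>j=2..m. \<eta> 1 * (\<beta> j * X j \<omega>)) = \<eta> 1 * (\<Sum>j=2..m. \<beta> j * X j \<omega>)"
              by (rule sum_distrib_left[symmetric])
            finally show ?thesis .
          qed
          have s2: "(\<Sum>j=1..m. \<eta> j * X j \<omega>) = \<eta> 1 * X 1 \<omega> + (\<Sum>j=2..m. \<eta> j * X j \<omega>)"
            unfolding m1 by simp
          have "\<delta> \<omega> = \<eta> 0 + (\<eta> 1 * X 1 \<omega> + (\<Sum>j=2..m. \<eta> j * X j \<omega>))"
            unfolding e(1) lin_comb_def s2 ..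
          moreover have "\<eta> 1 * D \<omega> + r \<omega> = \<eta> 1 * X 1 \<omega> - (\<eta> 1 * \<beta> 0 + \<eta> 1 * (\<Sum>j=2..m. \<beta> j * X j \<omega>))
             + (\<eta> 0 + \<eta> 1 * \<beta> 0 + ((\<Sum>j=2..m. \<eta> j * X j \<omega>) + \<eta> 1 * (\<Sum>j=2..m. \<beta> j * X j \<omega>)))"
            unfolding D_def a'_def r_def s1 by (simp only: right_diff_distrib distrib_left)
          ultimately show "\<delta> \<omega> = \<eta> 1 * D \<omega> + r \<omega>" by linarith
        qed
        have rsqi: "sq_integrable M r" unfolding r_def by (intro P.sqi_lin X2m) auto
        have rG: "r \<in> borel_measurable G" unfolding r_def by (intro lin_meas XG)
        have Dsqi: "sq_integrable M D" unfolding D_def by (intro P.sqi_diff X1 a'_sqi)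
        have "ip M r \<delta> = (\<eta> 0 + \<eta> 1 * \<beta> 0) * (\<integral>x. \<delta> x \<partial>M)
            + (\<Sum>j\<in>{2..m}. (\<eta> j + \<eta> 1 * \<beta> j) * ip M (X j) \<delta>)"
          unfolding r_def using P.ip_lin_left[of "{2..m}" X \<delta>] X2m \<delta>sqi by simp
        also have "\<dots> = 0" using e(2,3) by (simp add: ip_def)
        finally have rd: "ip M r \<delta> = 0" .
        have Dr: "ip M D r = ip M (X 1) r - ip M a' r" unfolding D_def
          by (rule P.ip_diff_left[OF X1 a'_sqi rsqi])
        have rD: "ip M r D = 0"
          using Dr ip_comm[of M r D] ip_comm[of M "X 1" r] ip_comm[of M a' r] K[OF rsqi rG]
          by linarith
        have rr: "r = (\<lambda>\<omega>. \<delta> \<omega> - \<eta> 1 * D \<omega>)" using \<delta>r by (simp add: fun_eq_iff)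
        have "ip M r r = ip M (\<lambda>\<omega>. \<delta> \<omega> - \<eta> 1 * D \<omega>) r"
          by (rule arg_cong[where f="\<lambda>f. ip M f r"], rule rr)
        also have "\<dots> = ip M \<delta> r - ip M (\<lambda>\<omega>. \<eta> 1 * D \<omega>) r"
          by (rule P.ip_diff_left[OF \<delta>sqi P.sqi_cmult[OF Dsqi] rsqi])
        also have "ip M (\<lambda>\<omega>. \<eta> 1 * D \<omega>) r = \<eta> 1 * ip M D r" by (rule ip_cmult_left)
        finally have rr0: "ip M r r = ip M \<delta> r - \<eta> 1 * ip M D r" .
        have "ip M r r = 0"
          using rr0 rd rD ip_comm[of M \<delta> r] ip_comm[of M D r] by simp
        then have "AE x in M. r x = 0" using P.ip_self_zero rsqi by blast
        then have rh: "ip M r h = 0" by (rule P.ip_zero_AE)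
        have "ip M \<delta> h = ip M (\<lambda>\<omega>. \<eta> 1 * D \<omega> + r \<omega>) h"
          by (rule arg_cong[where f="\<lambda>f. ip M f h"], rule \<delta>r)
        also have "\<dots> = ip M (\<lambda>\<omega>. \<eta> 1 * D \<omega>) h + ip M r h"
          by (rule P.ip_add_left[OF P.sqi_cmult[OF Dsqi] rsqi hsqi])
        also have "ip M (\<lambda>\<omega>. \<eta> 1 * D \<omega>) h = \<eta> 1 * ip M D h" by (rule ip_cmult_left)
        finally have dh: "ip M \<delta> h = \<eta> 1 * ip M D h + ip M r h" .
        have Dh: "ip M D h = ip M (X 1) h - ip M a' h" unfolding D_def
          by (rule P.ip_diff_left[OF X1 a'_sqi hsqi])
        have "ip M D h = 0"
          using Dh ip_comm[of M h "X 1"] ip_comm[of M h a'] K[OF hsqi hG] by linarith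
        then have "ip M \<delta> h = 0" using dh rh by simp
        with Yd show ?thesis by simp
      qed
      show "partial_lin_mean_impact M X m Y = 0"
      proof (cases "H_lin M X m = {}")
        case True
        then show ?thesis unfolding partial_lin_mean_impact_def by simp
      next
        case False
        then have "(\<lambda>\<delta>. \<integral>\<omega>. Y \<omega> * \<delta> \<omega> \<partial>M) ` H_lin M X m = {0}" using zero by auto
        then show ?thesis unfolding partial_lin_mean_impact_def by simp
      qed
    qed
  qed
qed
end
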